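(* Let $\epsilon>0$ and let $\mathcal C_\epsilon$ be an extended set of extreme points. Then for any sequence $\vec b_1,\dots,\vec b_T$ of buyer valuations from the types $\vec v_1,\dots,\vec v_V$ and any menu $\vec\rho^*$ maximizing $\sum_{t=1}^T u(\vec b_t,\vec\rho)$ over all length-$\ell$ menus, $$\max_{\vec\rho\in\mathcal C_\epsilon}\sum_{t=1}^T u(\vec b_t,\vec\rho)\ \ge\ \sum_{t=1}^T u(\vec b_t,\vec\rho^* )-2K\epsilon T.$$
   Context: A length-$\ell$ menu of two-part tariffs is parameterized by $\vec\rho=(p_1^{(1)},p_2^{(1)},\dots,p_1^{(\ell)},p_2^{(\ell)})\in[0,H]^{2\ell}$. A buyer valuation $\vec v=(v(1),\dots,v(K))$ is nondecreasing in $[0,H]$ with $v(0)=0$; the buyer chooses a menu option $(j,k)$, $j\in[\ell]$, $k\in\{0,\dots,K\}$, maximizing $v(k)-\mathbf 1[k\ge1](p_1^{(j)}+kp_2^{(j)})$, and revenue $u(\vec v,\vec\rho)$ is its payment. There are finitely many known buyer types $\vec v_1,\dots,\vec v_V$. A mapping $\mu$ assigns to each type a menu option; it is feasible if some menu induces every type to choose its assigned option; $\lambda_\mu$ is the set of menus inducing $\mu$. An extended set of extreme points $\mathcal C_\epsilon$ is a set of menus such that for every feasible $\mu$ and every extreme point $\vec\rho$ of the closure of $\lambda_\mu$: if $\vec\rho\in\lambda_\mu$ then $\vec\rho\in\mathcal C_\epsilon$, and otherwise there is $\vec\rho'\in\mathcal C_\epsilon\cap\lambda_\mu$ with $\|\vec\rho-\vec\rho'\|_1\le\epsilon$.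 *)

theory Defs
  imports "HOL-Analysis.Analysis"
begin

text \<open>A length-l menu of two-part tariffs: the index type 'l has CARD('l) = l elements;
  entry j is the pair (p1^(j), p2^(j)).  Valuations are functions nat => real, v k = value of k units.\<close>

type_synonym 'l menu = "(real \<times> real) ^ 'l"
type_synonym valuation = "nat \<Rightarrow> real"

definition menus :: "real \<Rightarrow> 'l::finite menu set" where
  "menus H = {\<rho>. \<forall>j. fst (\<rho> $ j) \<in> {0..H} \<and> snd (\<rho> $ j) \<in> {0..H}}"

definition options :: "nat \<Rightarrow> ('l::finite \<times> nat) set" where
  "options K = UNIV \<times> {0..K}"

definition payment :: "'l::finite menu \<Rightarrow> 'l \<times> nat \<Rightarrow> real" where
  "payment \<rho> opt = (if snd opt = 0 then 0
      else fst (\<rho> $ fst opt) + real (snd opt) * snd (\<rho> $ fst opt))"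

definition buyer_util :: "valuation \<Rightarrow> 'l::finite menu \<Rightarrow> 'l \<times> nat \<Rightarrow> real" where
  "buyer_util v \<rho> opt = v (snd opt) - payment \<rho> opt"

definition valid_valuation :: "nat \<Rightarrow> real \<Rightarrow> valuation \<Rightarrow> bool" where
  "valid_valuation K H v \<longleftrightarrow> v 0 = 0 \<and> (\<forall>k\<in>{1..K}. v k \<in> {0..H})
     \<and> (\<forall>k1 k2. k1 \<le> k2 \<and> k2 \<le> K \<longrightarrow> v k1 \<le> v k2)"

text \<open>A buyer choice rule: for every valuation and menu it returns a utility-maximizing option
  (with an arbitrary but fixed tie-breaking).\<close>
definition valid_choice :: "nat \<Rightarrow> (valuation \<Rightarrow> 'l::finite menu \<Rightarrow> 'l \<times> nat) \<Rightarrow> bool" where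
  "valid_choice K ch \<longleftrightarrow> (\<forall>v \<rho>. ch v \<rho> \<in> options K \<and>
      (\<forall>opt\<in>options K. buyer_util v \<rho> opt \<le> buyer_util v \<rho> (ch v \<rho>)))"

definition revenue :: "(valuation \<Rightarrow> 'l::finite menu \<Rightarrow> 'l \<times> nat) \<Rightarrow> valuation \<Rightarrow> 'l menu \<Rightarrow> real" where
  "revenue ch v \<rho> = payment \<rho> (ch v \<rho>)"

definition lam :: "real \<Rightarrow> (valuation \<Rightarrow> 'l::finite menu \<Rightarrow> 'l \<times> nat) \<Rightarrow> (nat \<Rightarrow> valuation) \<Rightarrow> nat
    \<Rightarrow> (nat \<Rightarrow> 'l \<times> nat) \<Rightarrow> 'l menu set" where
  "lam H ch vt V \<mu> = {\<rho> \<in> menus H. \<forall>i<V. ch (vt i) \<rho> = \<mu> i}"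

definition feasible_map :: "real \<Rightarrow> (valuation \<Rightarrow> 'l::finite menu \<Rightarrow> 'l \<times> nat) \<Rightarrow> (nat \<Rightarrow> valuation) \<Rightarrow> nat
    \<Rightarrow> (nat \<Rightarrow> 'l \<times> nat) \<Rightarrow> bool" where
  "feasible_map H ch vt V \<mu> \<longleftrightarrow> lam H ch vt V \<mu> \<noteq> {}"

definition l1_dist :: "'l::finite menu \<Rightarrow> 'l menu \<Rightarrow> real" where
  "l1_dist \<rho> \<rho>' = (\<Sum>j\<in>UNIV. \<bar>fst (\<rho> $ j) - fst (\<rho>' $ j)\<bar> + \<bar>snd (\<rho> $ j) - snd (\<rho>' $ j)\<bar>)"

definition extended_extreme_points :: "real \<Rightarrow> (valuation \<Rightarrow> 'l::finite menu \<Rightarrow> 'l \<times> nat)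
    \<Rightarrow> (nat \<Rightarrow> valuation) \<Rightarrow> nat \<Rightarrow> real \<Rightarrow> 'l menu set \<Rightarrow> bool" where
  "extended_extreme_points H ch vt V \<epsilon> C \<longleftrightarrow> C \<subseteq> menus H \<and>
     (\<forall>\<mu>. feasible_map H ch vt V \<mu> \<longrightarrow>
        (\<forall>\<rho>. \<rho> extreme_point_of closure (lam H ch vt V \<mu>) \<longrightarrow>
           (if \<rho> \<in> lam H ch vt V \<mu> then \<rho> \<in> C
            else (\<exists>\<rho>'\<in>C \<inter> lam H ch vt V \<mu>. l1_dist \<rho> \<rho>' \<le> \<epsilon>))))"

end

theory Submission
  imports Defs
begin

lemma menus_bounded: "bounded (menus H :: 'l::finite menu set)"
proof -
  have "\<forall>x\<in>(menus H :: 'l menu set). norm x \<le> (\<Sum>j\<in>(UNIV::'l set). 2 * \<bar>H\<bar>)"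
  proof
    fix x :: "'l menu" assume x: "x \<in> menus H"
    have "norm x \<le> (\<Sum>j\<in>UNIV. \<bar>norm (x $ j)\<bar>)"
      unfolding norm_vec_def by (rule L2_set_le_sum_abs)
    also have "\<dots> \<le> (\<Sum>j\<in>(UNIV::'l set). 2 * \<bar>H\<bar>)"
    proof (rule sum_mono)
      fix j
      have "norm (x $ j) \<le> norm (fst (x$j)) + norm (snd (x$j))"
        by (metis norm_Pair_le prod.collapse)
      moreover have "fst (x$j) \<in> {0..H}" "snd (x$j) \<in> {0..H}" using x by (auto simp: menus_def)
      ultimately show "\<bar>norm (x $ j)\<bar> \<le> 2 * \<bar>H\<bar>" by auto
    qed
    finally show "norm x \<le> (\<Sum>j\<in>(UNIV::'l set). 2 * \<bar>H\<bar>)" .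
  qed
  then show ?thesis unfolding bounded_iff by blast
qed

theorem mainTheorem8:
  fixes ch :: "valuation \<Rightarrow> 'l::finite menu \<Rightarrow> 'l \<times> nat"
    and K :: nat and H \<epsilon> :: real and V T :: nat
    and vt b :: "nat \<Rightarrow> valuation" and C :: "'l menu set" and \<rho>star :: "'l menu"
  assumes "\<epsilon> > 0"
    and "valid_choice K ch"
    and "\<forall>i<V. valid_valuation K H (vt i)"
    and "extended_extreme_points H ch vt V \<epsilon> C"
    and "\<forall>t\<in>{1..T}. b t \<in> vt ` {..<V}"
    and "\<rho>star \<in> menus H"
    and "\<forall>\<rho>\<in>menus H. (\<Sum>t=1..T. revenue ch (b t) \<rho>) \<le> (\<Sum>t=1..T. revenue ch (b t) \<rho>star)"
  shows "\<exists>\<rho>\<in>C. (\<Sum>t=1..T. revenue ch (b t) \<rho>)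
            \<ge> (\<Sum>t=1..T. revenue ch (b t) \<rho>star) - 2 * real K * \<epsilon> * real T"
proof -
  define \<mu> where "\<mu> i = ch (vt i) \<rho>star" for i
  define L where "L = lam H ch vt V \<mu>"
  define g where "g t = ch (b t) \<rho>star" for t
  define f where "f \<rho> = (\<Sum>t=1..T. payment \<rho> (g t))" for \<rho>
  have starL: "\<rho>star \<in> L" using assms(6) by (simp add: L_def lam_def \<mu>_def)
  have feas: "feasible_map H ch vt V \<mu>" using starL by (auto simp: feasible_map_def L_def)
  have revL: "(\<Sum>t=1..T. revenue ch (b t) \<rho>) = f \<rho>" if "\<rho> \<in> L" for \<rho>
  proof -
    have "ch (b t) \<rho> = g t" if "t \<in> {1..T}" for t
    proof -
      obtain i where "i < V" "b t = vt i" using assms(5) \<open>t \<in> {1..T}\<close> by blast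
      then show ?thesis using \<open>\<rho> \<in> L\<close> by (simp add: L_def lam_def g_def \<mu>_def)
    qed
    then show ?thesis unfolding f_def revenue_def by (intro sum.cong) auto
  qed
  have lin: "f (u *\<^sub>R x + v *\<^sub>R y) = u * f x + v * f y" for u v x y
    unfolding f_def sum_distrib_left sum.distrib[symmetric]
    by (rule sum.cong) (auto simp: payment_def algebra_simps)
  define A where "A = closure L"
  have "bounded L" using menus_bounded[of H] by (rule bounded_subset) (auto simp: L_def lam_def)
  then have cA: "compact A" unfolding A_def by (simp add: compact_closure)
  then have ccA: "compact (convex hull A)" by (rule compact_convex_hull)
  define E where "E = {x. x extreme_point_of (convex hull A)}"
  have KM: "convex hull A = convex hull E"
    unfolding E_def using Krein_Milman_Minkowski[OF ccA convex_convex_hull] .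
  have "\<exists>e\<in>E. f e \<ge> f \<rho>star"
  proof (rule ccontr)
    assume "\<not> ?thesis"
    then have "E \<subseteq> {x. f x < f \<rho>star}" by auto
    moreover have "convex {x. f x < f \<rho>star}"
      unfolding convex_def
    proof (intro ballI allI impI)
      fix x y :: "'l menu" and u v :: real
      assume x: "x \<in> {x. f x < f \<rho>star}" and y: "y \<in> {x. f x < f \<rho>star}"
        and uv: "0 \<le> u" "0 \<le> v" "u + v = 1"
      have "u * f x \<le> u * f \<rho>star" using x uv by (intro mult_left_mono) auto
      moreover have "v * f y \<le> v * f \<rho>star" using y uv by (intro mult_left_mono) auto
      moreover have "u * f x < u * f \<rho>star \<or> v * f y < v * f \<rho>star"
        using x y uv by (cases "u = 0") auto
      ultimately have "u * f x + v * f y < (u + v) * f \<rho>star" by (auto simp: algebra_simps)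
      then show "u *\<^sub>R x + v *\<^sub>R y \<in> {x. f x < f \<rho>star}" using uv lin by simp
    qed
    ultimately have "convex hull E \<subseteq> {x. f x < f \<rho>star}" by (rule hull_minimal)
    moreover have "\<rho>star \<in> convex hull E"
      using KM starL hull_subset[of A convex] closure_subset[of L] unfolding A_def by auto
    ultimately show False by auto
  qed
  then obtain e where eE: "e \<in> E" and fe: "f e \<ge> f \<rho>star" by blast
  have eA: "e \<in> A" using eE extreme_point_of_convex_hull unfolding E_def by blast
  have eext: "e extreme_point_of A"
    using eE eA hull_subset[of A convex] unfolding E_def extreme_point_of_def by blast
  have nn: "0 \<le> 2 * real K * \<epsilon> * real T" using assms(1) by simp
  have gopt: "g t \<in> options K" for t using assms(2) unfolding valid_choice_def g_def by blast
  show ?thesis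
  proof (cases "e \<in> L")
    case True
    then have "e \<in> C" using assms(4) feas eext unfolding extended_extreme_points_def L_def A_def
      by metis
    then show ?thesis using revL[OF True] revL[OF starL] fe nn by (intro bexI[of _ e]) linarith+
  next
    case False
    then obtain r where rC: "r \<in> C" and rL: "r \<in> L" and d: "l1_dist e r \<le> \<epsilon>"
      using assms(4) feas eext unfolding extended_extreme_points_def L_def A_def by fastforce
    have pt: "\<bar>payment e (g t) - payment r (g t)\<bar> \<le> real K * \<epsilon>" for t
    proof -
      obtain j k where gt: "g t = (j, k)" by fastforce
      have kK: "k \<le> K" using gopt[of t] gt by (auto simp: options_def)
      define d1 where "d1 = \<bar>fst (e $ j) - fst (r $ j)\<bar>"
      define d2 where "d2 = \<bar>snd (e $ j) - snd (r $ j)\<bar>"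
      have dj: "d1 + d2 \<le> \<epsilon>"
      proof -
        have "d1 + d2 \<le> l1_dist e r" unfolding l1_dist_def d1_def d2_def
          by (rule member_le_sum[of j UNIV "\<lambda>j. \<bar>fst (e $ j) - fst (r $ j)\<bar> + \<bar>snd (e $ j) - snd (r $ j)\<bar>"]) auto
        then show ?thesis using d by simp
      qed
      show ?thesis
      proof (cases "k = 0")
        case True then show ?thesis using gt assms(1) by (simp add: payment_def)
      next
        case k: False
        have "payment e (g t) - payment r (g t) = (fst (e $ j) - fst (r $ j)) + real k * (snd (e $ j) - snd (r $ j))"
          using gt k by (simp add: payment_def algebra_simps)
        then have "\<bar>payment e (g t) - payment r (g t)\<bar> \<le> d1 + real k * d2"
          unfolding d1_def d2_def by (simp add: abs_mult abs_triangle_ineq order_trans[OF abs_triangle_ineq])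
        also have "\<dots> \<le> real K * d1 + real K * d2"
        proof (intro add_mono mult_right_mono)
          have "1 \<le> real K" using k kK by simp
          moreover have "0 \<le> d1" unfolding d1_def by simp
          ultimately show "d1 \<le> real K * d1" by (metis mult_left_mono mult_1 mult.commute)
        qed (use kK in \<open>auto simp: d2_def\<close>)
        also have "\<dots> \<le> real K * \<epsilon>" using dj by (simp add: distrib_left[symmetric] mult_left_mono)
        finally show ?thesis .
      qed
    qed
    have "f e - f r = (\<Sum>t=1..T. payment e (g t) - payment r (g t))"
      unfolding f_def by (simp add: sum_subtractf)
    also have "\<dots> \<le> (\<Sum>t=1..T. real K * \<epsilon>)"
      by (intro sum_mono) (use pt in \<open>auto simp: abs_le_iff\<close>)
    also have "\<dots> = real K * \<epsilon> * real T" by simp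
    finally have "f r \<ge> f e - real K * \<epsilon> * real T" by simp
    moreover have "real K * \<epsilon> * real T \<le> 2 * real K * \<epsilon> * real T" using nn by simp
    ultimately show ?thesis using revL[OF rL] revL[OF starL] fe rC by (intro bexI[of _ r]) linarith+
  qed
qed

end
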